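(* Let $\Lambda>2$ be real. Then the equation $(1+\rho)^{\Lambda+1}=4(1-\rho+2\rho^2)^{\Lambda-1}$ has a unique solution $\rho^{\star\star}_\Lambda$ in the interval $(0,1)$, and for $\rho\in(0,1)$ the following are equivalent: (a) $(1+\rho)^{\Lambda+1}\le4(1-\rho+2\rho^2)^{\Lambda-1}$; (b) $\rho\le\rho^{\star\star}_\Lambda$. *)

theory Defs
  imports Complex_Main
begin

end

theory Submission imports Defs begin

lemma q_pos: "0 < 1 - (x::real) + 2 * x\<^sup>2"
proof -
  have "0 \<le> (x - 1/4)^2" by simp
  moreover have "1 - x + 2 * x\<^sup>2 = 2*(x - 1/4)^2 + 7/8" by (simp add: power2_eq_square algebra_simps)
  ultimately show ?thesis by linarith
qed

lemma g_mono:
  fixes L x y :: real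
  assumes "L > 2" "0 \<le> x" "x < y" "y \<le> 1"
  shows "(6-2*L)*y^2 + (2-4*L)*y + 2*L < (6-2*L)*x^2 + (2-4*L)*x + 2*L"
proof -
  have h: "(6-2*L)*(x+y) + 2 - 4*L < 0"
  proof (cases "L \<le> 3")
    case True
    have "(6-2*L)*(x+y) \<le> (6-2*L)*2" using assms True by (intro mult_left_mono) auto
    thus ?thesis using assms by (simp add: algebra_simps)
  next
    case False
    have "(6-2*L)*(x+y) \<le> 0" using assms False by (intro mult_nonpos_nonneg) auto
    thus ?thesis using assms by linarith
  qed
  have "(6-2*L)*y^2 + (2-4*L)*y + 2*L - ((6-2*L)*x^2 + (2-4*L)*x + 2*L)
     = (y - x) * ((6-2*L)*(x+y) + 2 - 4*L)" by (simp add: power2_eq_square algebra_simps)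
  also have "\<dots> < 0" using h assms by (intro mult_pos_neg) auto
  finally show ?thesis by simp
qed

lemma f_deriv:
  fixes L x :: real
  assumes "x > -1"
  shows "((\<lambda>x. (L+1) * ln (1+x) - (L-1) * ln (1 - x + 2*x\<^sup>2) - ln 4) has_real_derivative
     ((6-2*L)*x^2 + (2-4*L)*x + 2*L) / ((1+x) * (1 - x + 2*x\<^sup>2))) (at x)"
proof -
  have q: "0 < 1 - x + 2*x\<^sup>2" by (rule q_pos)
  have "((\<lambda>x. (L+1) * ln (1+x) - (L-1) * ln (1 - x + 2*x\<^sup>2) - ln 4) has_real_derivative
     (L+1) * (1 / (1+x)) - (L-1) * ((- 1 + 2 * (2 * x)) / (1 - x + 2*x\<^sup>2)) - 0) (at x)"
    using assms q by (auto intro!: derivative_eq_intros)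
  moreover have "(L+1) * (1 / (1+x)) - (L-1) * ((- 1 + 2 * (2 * x)) / (1 - x + 2*x\<^sup>2)) - 0
     = ((6-2*L)*x^2 + (2-4*L)*x + 2*L) / ((1+x) * (1 - x + 2*x\<^sup>2))"
    using assms q by (simp add: field_simps power2_eq_square)
  ultimately show ?thesis by simp
qed


lemma powr_iff:
  fixes L x :: real
  assumes "x > -1"
  shows "((1 + x) powr (L + 1) \<le> 4 * (1 - x + 2 * x\<^sup>2) powr (L - 1)) \<longleftrightarrow>
           (L+1) * ln (1+x) - (L-1) * ln (1 - x + 2*x\<^sup>2) - ln 4 \<le> 0"
    and "((1 + x) powr (L + 1) = 4 * (1 - x + 2 * x\<^sup>2) powr (L - 1)) \<longleftrightarrow>
           (L+1) * ln (1+x) - (L-1) * ln (1 - x + 2*x\<^sup>2) - ln 4 = 0"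
proof -
  have q: "0 < 1 - x + 2*x\<^sup>2" by (rule q_pos)
  have a: "(1 + x) powr (L + 1) = exp ((L+1) * ln (1+x))"
    using assms by (simp add: powr_def)
  have b: "4 * (1 - x + 2 * x\<^sup>2) powr (L - 1) = exp (ln 4 + (L-1) * ln (1 - x + 2*x\<^sup>2))"
    using q by (simp add: powr_def exp_add)
  show "((1 + x) powr (L + 1) \<le> 4 * (1 - x + 2 * x\<^sup>2) powr (L - 1)) \<longleftrightarrow>
           (L+1) * ln (1+x) - (L-1) * ln (1 - x + 2*x\<^sup>2) - ln 4 \<le> 0"
    unfolding a b by (simp only: exp_le_cancel_iff, simp add: algebra_simps)
  show "((1 + x) powr (L + 1) = 4 * (1 - x + 2 * x\<^sup>2) powr (L - 1)) \<longleftrightarrow>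
           (L+1) * ln (1+x) - (L-1) * ln (1 - x + 2*x\<^sup>2) - ln 4 = 0"
    unfolding a b by auto
qed

theorem lemma8p3:
  fixes \<Lambda> :: real
  assumes "\<Lambda> > 2"
  shows "(\<exists>!r. 0 < r \<and> r < 1 \<and>
           (1 + r) powr (\<Lambda> + 1) = 4 * (1 - r + 2 * r\<^sup>2) powr (\<Lambda> - 1)) \<and>
         (\<forall>r. (0 < r \<and> r < 1 \<and>
           (1 + r) powr (\<Lambda> + 1) = 4 * (1 - r + 2 * r\<^sup>2) powr (\<Lambda> - 1)) \<longrightarrow>
         (\<forall>\<rho>::real. 0 < \<rho> \<and> \<rho> < 1 \<longrightarrow>
            ((1 + \<rho>) powr (\<Lambda> + 1) \<le> 4 * (1 - \<rho> + 2 * \<rho>\<^sup>2) powr (\<Lambda> - 1)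
             \<longleftrightarrow> \<rho> \<le> r)))"
proof -
  define L where "L = \<Lambda>"
  have L: "L > 2" using assms L_def by simp
  define f where "f = (\<lambda>x. (L+1) * ln (1+x) - (L-1) * ln (1 - x + 2*x\<^sup>2) - ln (4::real))"
  define g where "g = (\<lambda>x::real. (6-2*L)*x^2 + (2-4*L)*x + 2*L)"
  have D: "\<And>x. x > -1 \<Longrightarrow> (f has_real_derivative g x / ((1+x) * (1 - x + 2*x\<^sup>2))) (at x)"
    unfolding f_def g_def by (rule f_deriv)
  have cont: "\<And>a b. 0 \<le> a \<Longrightarrow> continuous_on {a..b} f"
    by (rule continuous_at_imp_continuous_on) (auto intro!: DERIV_isCont D)
  have f0: "f 0 < 0" by (simp add: f_def)
  have ln4: "ln (4::real) = 2 * ln 2"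
    using ln_mult[of 2 2] by simp
  have f1: "f 1 = 0" by (simp add: f_def ln4 algebra_simps)
  have g0: "g 0 > 0" using L by (simp add: g_def)
  have g1: "g 1 < 0" using L by (simp add: g_def)
  obtain c where c: "0 \<le> c" "c \<le> 1" "g c = 0"
  proof -
    have "continuous_on {0..1} g" unfolding g_def by (intro continuous_intros)
    then obtain x where "0 \<le> x" "x \<le> 1" "g x = 0"
      using IVT2'[of g 1 0 0] g0 g1 by auto
    thus ?thesis using that by blast
  qed
  have c01: "0 < c" "c < 1" using c g0 g1 by (auto simp: less_le)
  have gm: "\<And>x y. 0 \<le> x \<Longrightarrow> x < y \<Longrightarrow> y \<le> 1 \<Longrightarrow> g y < g x"
    unfolding g_def using L by (rule g_mono)
  have gpos: "\<And>x. 0 \<le> x \<Longrightarrow> x < c \<Longrightarrow> g x > 0" using gm c by fastforce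
  have gneg: "\<And>x. c < x \<Longrightarrow> x \<le> 1 \<Longrightarrow> g x < 0" using gm c by fastforce
  have inc: "\<And>a b. 0 \<le> a \<Longrightarrow> a < b \<Longrightarrow> b \<le> c \<Longrightarrow> f a < f b"
  proof -
    fix a b :: real assume ab: "0 \<le> a" "a < b" "b \<le> c"
    show "f a < f b"
    proof (rule DERIV_pos_imp_increasing_open[OF ab(2)])
      fix x assume x: "a < x" "x < b"
      have "g x / ((1+x) * (1 - x + 2*x\<^sup>2)) > 0"
        using gpos[of x] x ab q_pos[of x] by (intro divide_pos_pos mult_pos_pos) auto
      thus "\<exists>y. DERIV f x :> y \<and> y > 0" using D[of x] x ab by auto
    qed (rule cont[OF ab(1)])
  qed
  have dec: "\<And>a b. c \<le> a \<Longrightarrow> a < b \<Longrightarrow> b \<le> 1 \<Longrightarrow> f a > f b"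
  proof -
    fix a b :: real assume ab: "c \<le> a" "a < b" "b \<le> 1"
    show "f a > f b"
    proof (rule DERIV_neg_imp_decreasing_open[OF ab(2)])
      fix x assume x: "a < x" "x < b"
      have "g x / ((1+x) * (1 - x + 2*x\<^sup>2)) < 0"
        using gneg[of x] x ab q_pos[of x] c by (intro divide_neg_pos mult_pos_pos) auto
      thus "\<exists>y. DERIV f x :> y \<and> y < 0" using D[of x] x ab c by auto
    qed (rule cont, use ab c in auto)
  qed
  have fpos: "\<And>x. c \<le> x \<Longrightarrow> x < 1 \<Longrightarrow> f x > 0" using dec f1 by fastforce
  have fc: "f c > 0" using fpos c01 by simp
  obtain r where r: "0 \<le> r" "r \<le> c" "f r = 0"
    using IVT'[of f 0 0 c] f0 fc c cont[of 0 c] by auto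
  have r0: "0 < r" "r < c" using r f0 fc by (auto simp: less_le)
  have uniq: "\<And>y. 0 < y \<Longrightarrow> y < 1 \<Longrightarrow> f y = 0 \<Longrightarrow> y = r"
  proof -
    fix y :: real assume y: "0 < y" "y < 1" "f y = 0"
    have "y < c" using fpos[of y] y by force
    show "y = r"
      using inc[of y r] inc[of r y] y r r0 \<open>y < c\<close> by (cases y r rule: linorder_cases) auto
  qed
  have equiv: "\<And>\<rho>. 0 < \<rho> \<Longrightarrow> \<rho> < 1 \<Longrightarrow> (f \<rho> \<le> 0 \<longleftrightarrow> \<rho> \<le> r)"
  proof -
    fix p :: real assume p: "0 < p" "p < 1"
    show "f p \<le> 0 \<longleftrightarrow> p \<le> r"
    proof (cases "c \<le> p")
      case True thus ?thesis using fpos[of p] p r0 by auto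
    next
      case False
      thus ?thesis using inc[of p r] inc[of r p] p r r0 by (cases p r rule: linorder_cases) auto
    qed
  qed
  have P: "\<And>x. 0 < x \<Longrightarrow> ((1 + x) powr (\<Lambda> + 1) = 4 * (1 - x + 2 * x\<^sup>2) powr (\<Lambda> - 1)) \<longleftrightarrow> f x = 0"
    unfolding f_def L_def by (rule powr_iff) simp
  have Q: "\<And>x. 0 < x \<Longrightarrow> ((1 + x) powr (\<Lambda> + 1) \<le> 4 * (1 - x + 2 * x\<^sup>2) powr (\<Lambda> - 1)) \<longleftrightarrow> f x \<le> 0"
    unfolding f_def L_def by (rule powr_iff) simp
  show ?thesis
  proof (intro conjI allI impI)
    show "\<exists>!r. 0 < r \<and> r < 1 \<and>
           (1 + r) powr (\<Lambda> + 1) = 4 * (1 - r + 2 * r\<^sup>2) powr (\<Lambda> - 1)"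
    proof (rule ex1I[of _ r])
      show "0 < r \<and> r < 1 \<and> (1 + r) powr (\<Lambda> + 1) = 4 * (1 - r + 2 * r\<^sup>2) powr (\<Lambda> - 1)"
        using P[of r] r r0 c01 by simp
    next
      fix y assume "0 < y \<and> y < 1 \<and> (1 + y) powr (\<Lambda> + 1) = 4 * (1 - y + 2 * y\<^sup>2) powr (\<Lambda> - 1)"
      thus "y = r" using P[of y] uniq[of y] by simp
    qed
  next
    fix s p :: real
    assume s: "0 < s \<and> s < 1 \<and> (1 + s) powr (\<Lambda> + 1) = 4 * (1 - s + 2 * s\<^sup>2) powr (\<Lambda> - 1)"
      and p: "0 < p \<and> p < 1"
    have "s = r" using s P[of s] uniq[of s] by simp
    thus "((1 + p) powr (\<Lambda> + 1) \<le> 4 * (1 - p + 2 * p\<^sup>2) powr (\<Lambda> - 1)) = (p \<le> s)"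
      using Q[of p] equiv[of p] p by simp
  qed
qed

end
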